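(* Let $N\ge 2$, $d\ge1$, let $f:\mathbb{Z}_N^d\to\mathbb{C}$ have support $E=\mathrm{supp}(f)$, and suppose the Fourier coefficients $\hat f(m)$ for $m$ in a set $S\subseteq\mathbb{Z}_N^d$ are unobserved. Suppose there are constants $K\ge 0$ and $2\le\alpha\le 3$ such that every subset $T\subseteq\mathbb{Z}_N^d$ with $|T|\le 2|E|$ satisfies $\Lambda_2(T)\le K|T|^\alpha$. If \[ |E|^3\left(\Lambda_2(S)-|S|(|S|-1)\left[1-\sqrt{\frac{K}{(2|E|)^{3-\alpha}}}\sqrt{\frac{N^d}{2|E||S|}}\right]-|S|^2\left(1-\frac{N^d}{2|E||S|}\right)\right)<\frac{N^{3d}}{8}, \] then $f$ can be uniquely recovered, i.e. every function $g:\mathbb{Z}_N^d\to\mathbb{C}$ with $|\mathrm{supp}(g)|=|E|$ and $\hat g(m)=\hat f(m)$ for all $m\notin S$ satisfies $g=f$.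
   Context: $\mathbb{Z}_N=\mathbb{Z}/N\mathbb{Z}$. The discrete Fourier transform of $f:\mathbb{Z}_N^d\to\mathbb{C}$ is $\hat f(m)=N^{-d/2}\sum_{x\in\mathbb{Z}_N^d}f(x)e^{-2\pi i\, m\cdot x/N}$. The support of a function is the set of points where it is nonzero. For $A\subseteq\mathbb{Z}_N^d$, the additive energy is $\Lambda_2(A)=\#\{(x_1,x_2,x_3,x_4)\in A^4: x_1+x_2=x_3+x_4\}$. *)

theory Defs
  imports "HOL-Analysis.Analysis"
begin

definition ZNd :: "nat \<Rightarrow> nat \<Rightarrow> (nat \<Rightarrow> int) set" where
  "ZNd N d = {x. (\<forall>i<d. 0 \<le> x i \<and> x i < int N) \<and> (\<forall>i\<ge>d. x i = 0)}"

definition zadd :: "nat \<Rightarrow> nat \<Rightarrow> (nat \<Rightarrow> int) \<Rightarrow> (nat \<Rightarrow> int) \<Rightarrow> (nat \<Rightarrow> int)" where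
  "zadd N d x y = (\<lambda>i. if i < d then (x i + y i) mod int N else 0)"

definition dft :: "nat \<Rightarrow> nat \<Rightarrow> ((nat \<Rightarrow> int) \<Rightarrow> complex) \<Rightarrow> (nat \<Rightarrow> int) \<Rightarrow> complex" where
  "dft N d f m = complex_of_real (real N powr (- real d / 2)) *
     (\<Sum>x\<in>ZNd N d. f x * exp (- 2 * pi * \<i> * of_int (\<Sum>i<d. m i * x i) / of_nat N))"

definition supp :: "nat \<Rightarrow> nat \<Rightarrow> ((nat \<Rightarrow> int) \<Rightarrow> complex) \<Rightarrow> (nat \<Rightarrow> int) set" where
  "supp N d f = {x \<in> ZNd N d. f x \<noteq> 0}"

definition energy :: "nat \<Rightarrow> nat \<Rightarrow> (nat \<Rightarrow> int) set \<Rightarrow> nat" where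
  "energy N d A = card {(x1, x2, x3, x4). x1 \<in> A \<and> x2 \<in> A \<and> x3 \<in> A \<and> x4 \<in> A \<and>
      zadd N d x1 x2 = zadd N d x3 x4}"

end

theory Submission
  imports Defs
begin


definition ee :: "nat \<Rightarrow> int \<Rightarrow> complex" where
  "ee N k = exp (2 * pi * \<i> * of_int k / of_nat N)"

definition chi :: "nat \<Rightarrow> nat \<Rightarrow> (nat \<Rightarrow> int) \<Rightarrow> (nat \<Rightarrow> int) \<Rightarrow> complex" where
  "chi N d m x = ee N (\<Sum>i<d. m i * x i)"

lemma ee_add: "ee N (a + b) = ee N a * ee N b"
  unfolding ee_def by (simp add: exp_add[symmetric] distrib_left add_divide_distrib)

lemma ee_N: "N > 0 \<Longrightarrow> ee N (int N * j) = 1"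
proof -
  assume N: "N > 0"
  have "2 * pi * \<i> * of_int (int N * j) / of_nat N = 2 * pi * \<i> * of_int j"
    using N by (simp add: field_simps)
  then show ?thesis unfolding ee_def by (simp add: exp_eq_1)
qed

lemma ee_cong: "N > 0 \<Longrightarrow> int N dvd (a - b) \<Longrightarrow> ee N a = ee N b"
proof -
  assume N: "N > 0" and "int N dvd (a - b)"
  then obtain j where j: "a = b + int N * j" by (metis add.commute diff_add_cancel dvdE)
  show ?thesis unfolding j ee_add using ee_N[OF N] by simp
qed

lemma ee_one_iff: "N > 0 \<Longrightarrow> ee N k = 1 \<longleftrightarrow> int N dvd k"
proof
  assume N: "N > 0" and h: "ee N k = 1"
  then obtain n where "Im (2 * pi * \<i> * of_int k / of_nat N) = real_of_int (2 * n) * pi"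
    unfolding ee_def exp_eq_1 by blast
  then have "2 * pi * k / N = 2 * n * pi" by simp
  then have "real_of_int k = real_of_int (n * int N)" using N by (simp add: field_simps)
  then have "k = n * N" by linarith
  then show "int N dvd k" by simp
next
  assume N: "N > 0" and "int N dvd k"
  then show "ee N k = 1" using ee_cong[OF N, of k 0] by (simp add: ee_def)
qed

lemma cnj_ee: "cnj (ee N k) = ee N (- k)"
  unfolding ee_def exp_cnj by simp

lemma norm_ee: "norm (ee N k) = 1"
  unfolding ee_def by (simp add: norm_exp_eq_Re)

lemma chi_sym: "chi N d m x = chi N d x m"
  unfolding chi_def by (simp add: mult.commute)

lemma norm_chi: "norm (chi N d m x) = 1"
  unfolding chi_def by (rule norm_ee)

lemma chi_zadd:
  assumes N: "N > 0"
  shows "chi N d (zadd N d a b) x = chi N d a x * chi N d b x"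
proof -
  have "int N dvd ((\<Sum>i<d. zadd N d a b i * x i) - (\<Sum>i<d. a i * x i + b i * x i))"
    unfolding sum_subtractf[symmetric]
  proof (rule dvd_sum)
    fix i assume "i \<in> {..<d}"
    then have "zadd N d a b i * x i - (a i * x i + b i * x i) = ((a i + b i) mod int N - (a i + b i)) * x i"
      by (simp add: zadd_def algebra_simps)
    moreover have "int N dvd ((a i + b i) mod int N - (a i + b i))"
      by (metis dvd_minus_iff minus_diff_eq minus_mod_eq_mult_div dvd_triv_left)
    ultimately show "int N dvd zadd N d a b i * x i - (a i * x i + b i * x i)" by simp
  qed
  then have "chi N d (zadd N d a b) x = ee N (\<Sum>i<d. a i * x i + b i * x i)"
    unfolding chi_def using ee_cong[OF N] by blast
  then show ?thesis unfolding chi_def by (simp add: sum.distrib ee_add)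
qed

lemma chi_mult_cnj: "chi N d a x * cnj (chi N d b x) = chi N d (\<lambda>i. a i - b i) x"
  unfolding chi_def cnj_ee ee_add[symmetric]
  by (simp add: sum_subtractf[symmetric] sum.distrib[symmetric] sum_negf[symmetric] left_diff_distrib)

lemma zadd_in: "N > 0 \<Longrightarrow> zadd N d a b \<in> ZNd N d"
  unfolding zadd_def ZNd_def by auto



lemma ZNd_Suc: "ZNd N (Suc d) = (\<lambda>(x,j). x(d:=j)) ` (ZNd N d \<times> {0..<int N})"
proof (rule set_eqI, rule iffI)
  fix y assume y: "y \<in> ZNd N (Suc d)"
  have "y = (\<lambda>(x,j). x(d:=j)) (y(d:=0), y d)" by auto
  moreover have "(y(d:=0), y d) \<in> ZNd N d \<times> {0..<int N}"
    using y unfolding ZNd_def by auto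
  ultimately show "y \<in> (\<lambda>(x,j). x(d:=j)) ` (ZNd N d \<times> {0..<int N})" by blast
next
  fix y assume "y \<in> (\<lambda>(x,j). x(d:=j)) ` (ZNd N d \<times> {0..<int N})"
  then obtain x j where "y = x(d:=j)" "x \<in> ZNd N d" "j \<in> {0..<int N}" by auto
  then show "y \<in> ZNd N (Suc d)" unfolding ZNd_def by auto
qed

lemma ZNd_inj: "inj_on (\<lambda>(x,j). x(d:=j)) (ZNd N d \<times> {0..<int N})"
proof (rule inj_onI, clarify)
  fix x j x' j'
  assume x: "x \<in> ZNd N d" and x': "x' \<in> ZNd N d" and e: "x(d := j) = x'(d := j')"
  have "j = j'" using fun_cong[OF e, of d] by simp
  moreover have "x = x'"
  proof
    fix i show "x i = x' i"
    proof (cases "i = d")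
      case True then show ?thesis using x x' unfolding ZNd_def by auto
    next
      case False then show ?thesis using fun_cong[OF e, of i] by simp
    qed
  qed
  ultimately show "x = x' \<and> j = j'" by simp
qed

lemma ZNd_finite_card: "finite (ZNd N d) \<and> card (ZNd N d) = N ^ d"
proof (induction d)
  case 0
  have "ZNd N 0 = {\<lambda>_. 0}" unfolding ZNd_def by auto
  then show ?case by simp
next
  case (Suc d)
  have "card (ZNd N (Suc d)) = card (ZNd N d \<times> {0..<int N})"
    unfolding ZNd_Suc by (rule card_image[OF ZNd_inj])
  also have "\<dots> = N ^ d * N" using Suc by (simp add: card_cartesian_product)
  finally show ?case unfolding ZNd_Suc using Suc by (simp add: mult.commute)
qed

lemma finite_ZNd: "finite (ZNd N d)" using ZNd_finite_card by blast
lemma card_ZNd: "card (ZNd N d) = N ^ d" using ZNd_finite_card by blast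

lemma zadd_inj:
  assumes N: "N > 0"
  shows "inj_on (\<lambda>x. zadd N d x y) (ZNd N d)"
proof (rule inj_onI)
  fix x x' assume x: "x \<in> ZNd N d" and x': "x' \<in> ZNd N d"
    and e: "zadd N d x y = zadd N d x' y"
  show "x = x'"
  proof
    fix i show "x i = x' i"
    proof (cases "i < d")
      case True
      have "(x i + y i) mod int N = (x' i + y i) mod int N"
        using fun_cong[OF e, of i] True by (simp add: zadd_def)
      moreover have "x i mod int N = ((x i + y i) mod int N - y i) mod int N"
        "x' i mod int N = ((x' i + y i) mod int N - y i) mod int N"
        by (simp_all add: mod_diff_left_eq)
      ultimately have "x i mod int N = x' i mod int N" by simp
      moreover have "x i mod int N = x i" "x' i mod int N = x' i"
        using x x' True unfolding ZNd_def by auto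
      ultimately show ?thesis by simp
    next
      case False then show ?thesis using x x' unfolding ZNd_def by auto
    qed
  qed
qed

lemma zadd_image:
  assumes N: "N > 0"
  shows "(\<lambda>x. zadd N d x y) ` ZNd N d = ZNd N d"
proof -
  have sub: "(\<lambda>x. zadd N d x y) ` ZNd N d \<subseteq> ZNd N d" using zadd_in[OF N] by auto
  have "card ((\<lambda>x. zadd N d x y) ` ZNd N d) = card (ZNd N d)"
    by (rule card_image[OF zadd_inj[OF N]])
  then show ?thesis using card_subset_eq[OF finite_ZNd sub] by simp
qed

lemma sum_shift:
  assumes N: "N > 0"
  shows "(\<Sum>x\<in>ZNd N d. g (zadd N d x y)) = (\<Sum>x\<in>ZNd N d. g x)"
proof -
  have "(\<Sum>x\<in>ZNd N d. g x) = (\<Sum>x\<in>(\<lambda>x. zadd N d x y) ` ZNd N d. g x)"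
    using zadd_image[OF N] by simp
  also have "\<dots> = (\<Sum>x\<in>ZNd N d. g (zadd N d x y))"
    by (rule sum.reindex[OF zadd_inj[OF N], unfolded comp_def])
  finally show ?thesis by simp
qed

lemma chi_orth:
  assumes N: "N \<ge> 2" and a: "a \<in> ZNd N d" and b: "b \<in> ZNd N d"
  shows "(\<Sum>x\<in>ZNd N d. chi N d a x * cnj (chi N d b x)) = (if a = b then of_nat N ^ d else 0)"
proof (cases "a = b")
  case True
  have "chi N d a x * cnj (chi N d a x) = 1" for x
    using norm_chi[of N d a x] by (metis complex_norm_square of_real_1 power_one)
  then show ?thesis using True by (simp add: card_ZNd)
next
  case False
  have N0: "N > 0" using N by simp
  obtain i where i: "a i \<noteq> b i" using False by blast
  have id: "i < d"
  proof (rule ccontr)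
    assume "\<not> i < d" then show False using i a b unfolding ZNd_def by auto
  qed
  define z where "z = (\<lambda>i. a i - b i)"
  define y :: "nat \<Rightarrow> int" where "y = (\<lambda>j. if j = i then 1 else 0)"
  have "(\<Sum>j<d. z j * y j) = z i" unfolding y_def using id by (simp add: if_distrib cong: if_cong)
  then have cy: "chi N d z y = ee N (z i)" unfolding chi_def by simp
  have "\<not> int N dvd z i"
  proof
    assume "int N dvd z i"
    moreover have "z i \<noteq> 0" using i unfolding z_def by auto
    moreover have "0 \<le> a i" "a i < int N" "0 \<le> b i" "b i < int N" using a b id unfolding ZNd_def by auto
    then have "\<bar>z i\<bar> < int N" unfolding z_def by linarith
    ultimately show False using dvd_imp_le_int[of "z i" "int N"] by auto
  qed
  then have ne: "chi N d z y \<noteq> 1" unfolding cy using ee_one_iff[OF N0] by blast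
  let ?S = "\<Sum>x\<in>ZNd N d. chi N d z x"
  have "?S = (\<Sum>x\<in>ZNd N d. chi N d z (zadd N d x y))" by (rule sum_shift[OF N0, symmetric])
  also have "\<dots> = (\<Sum>x\<in>ZNd N d. chi N d z x * chi N d z y)"
    by (simp add: chi_sym[of N d z] chi_zadd[OF N0])
  also have "\<dots> = ?S * chi N d z y" by (simp add: sum_distrib_right)
  finally have "?S * (1 - chi N d z y) = 0" by (simp add: algebra_simps)
  then have "?S = 0" using ne by simp
  then show ?thesis using False by (simp add: chi_mult_cnj z_def)
qed



definition cr :: "nat \<Rightarrow> nat \<Rightarrow> real" where
  "cr N d = real N powr (- real d / 2)"

lemma cr_pos: "N > 0 \<Longrightarrow> cr N d > 0" unfolding cr_def by simp

lemma cr_sq: "N > 0 \<Longrightarrow> cr N d * cr N d * real N ^ d = 1"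
proof -
  assume N: "N > 0"
  have "cr N d * cr N d = real N powr (- real d)"
    unfolding cr_def by (simp add: powr_add[symmetric])
  also have "\<dots> = inverse (real N ^ d)" using N by (simp add: powr_minus powr_realpow)
  finally show ?thesis using N by simp
qed

lemma cnj_chi: "cnj (chi N d m x) = exp (- 2 * pi * \<i> * of_int (\<Sum>i<d. m i * x i) / of_nat N)"
  by (simp only: chi_def cnj_ee) (simp add: ee_def)

lemma dft_chi: "dft N d f m = of_real (cr N d) * (\<Sum>x\<in>ZNd N d. f x * cnj (chi N d m x))"
  unfolding dft_def cr_def cnj_chi by simp

lemma inversion:
  assumes N: "N \<ge> 2" and x: "x \<in> ZNd N d"
  shows "of_real (cr N d) * (\<Sum>m\<in>ZNd N d. dft N d h m * chi N d m x) = h x"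
proof -
  have N0: "N > 0" using N by simp
  have "(\<Sum>m\<in>ZNd N d. dft N d h m * chi N d m x)
      = of_real (cr N d) * (\<Sum>m\<in>ZNd N d. \<Sum>y\<in>ZNd N d. h y * (chi N d x m * cnj (chi N d y m)))"
    unfolding dft_chi sum_distrib_left sum_distrib_right
    by (intro sum.cong refl) (simp add: chi_sym algebra_simps)
  also have "(\<Sum>m\<in>ZNd N d. \<Sum>y\<in>ZNd N d. h y * (chi N d x m * cnj (chi N d y m)))
      = (\<Sum>y\<in>ZNd N d. h y * (\<Sum>m\<in>ZNd N d. chi N d x m * cnj (chi N d y m)))"
    by (subst sum.swap) (simp add: sum_distrib_left)
  also have "\<dots> = (\<Sum>y\<in>ZNd N d. h y * (if x = y then of_nat N ^ d else 0))"
    using chi_orth[OF N x] by simp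
  also have "\<dots> = h x * of_nat N ^ d" using x by (simp add: finite_ZNd if_distrib cong: if_cong)
  finally have "of_real (cr N d) * (\<Sum>m\<in>ZNd N d. dft N d h m * chi N d m x)
     = h x * of_real (cr N d * cr N d * real N ^ d)" by simp
  then show ?thesis using cr_sq[OF N0] by simp
qed

lemma plancherel:
  assumes N: "N \<ge> 2"
  shows "(\<Sum>m\<in>ZNd N d. (norm (dft N d h m))^2) = (\<Sum>x\<in>ZNd N d. (norm (h x))^2)"
proof -
  have "complex_of_real (\<Sum>m\<in>ZNd N d. (norm (dft N d h m))^2) = (\<Sum>m\<in>ZNd N d. dft N d h m * cnj (dft N d h m))"
    by (simp add: complex_norm_square[symmetric])
  also have "\<dots> = (\<Sum>m\<in>ZNd N d. dft N d h m * (of_real (cr N d) * (\<Sum>y\<in>ZNd N d. cnj (h y) * chi N d m y)))"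
    by (rule sum.cong[OF refl]) (simp add: dft_chi[of N d h] sum_distrib_left)
  also have "\<dots> = (\<Sum>y\<in>ZNd N d. cnj (h y) * (of_real (cr N d) * (\<Sum>m\<in>ZNd N d. dft N d h m * chi N d m y)))"
    by (simp add: sum_distrib_left sum_distrib_right algebra_simps) (rule sum.swap)
  also have "\<dots> = (\<Sum>y\<in>ZNd N d. cnj (h y) * h y)"
    using inversion[OF N] by simp
  also have "\<dots> = (\<Sum>x\<in>ZNd N d. complex_of_real ((norm (h x))^2))"
    by (simp only: complex_norm_square mult.commute)
  also have "\<dots> = complex_of_real (\<Sum>x\<in>ZNd N d. (norm (h x))^2)"
    by (simp only: of_real_sum)
  finally show ?thesis by (simp only: of_real_eq_iff)
qed



abbreviation zp :: "nat \<Rightarrow> nat \<Rightarrow> (nat \<Rightarrow> int) \<times> (nat \<Rightarrow> int) \<Rightarrow> nat \<Rightarrow> int" where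
  "zp N d p \<equiv> zadd N d (fst p) (snd p)"

lemma fourth:
  fixes E :: "(nat\<Rightarrow>int) \<Rightarrow> (nat\<Rightarrow>int) \<Rightarrow> complex" and v :: "(nat\<Rightarrow>int) \<Rightarrow> complex"
  assumes N: "N > 0" and A: "A \<subseteq> ZNd N d"
  and Emul: "\<And>a b x. a \<in> ZNd N d \<Longrightarrow> b \<in> ZNd N d \<Longrightarrow> x \<in> ZNd N d \<Longrightarrow> E a x * E b x = E (zadd N d a b) x"
  and Eorth: "\<And>a b. a \<in> ZNd N d \<Longrightarrow> b \<in> ZNd N d \<Longrightarrow>
      (\<Sum>x\<in>ZNd N d. E a x * cnj (E b x)) = (if a = b then of_nat N ^ d else 0)"
  shows "(\<Sum>x\<in>ZNd N d. (norm (\<Sum>m\<in>A. v m * E m x))^4) \<le> real N ^ d *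
     (\<Sum>p\<in>A\<times>A. \<Sum>q\<in>A\<times>A. if zp N d p = zp N d q then
        norm (v (fst p)) * norm (v (snd p)) * norm (v (fst q)) * norm (v (snd q)) else 0)"
proof -
  let ?Z = "ZNd N d"
  define w where "w x = (\<Sum>m\<in>A. v m * E m x)" for x
  define V where "V p = v (fst p) * v (snd p)" for p :: "(nat\<Rightarrow>int) \<times> (nat\<Rightarrow>int)"
  have fA: "finite A" using A finite_ZNd finite_subset by blast
  have sq: "w x * w x = (\<Sum>p\<in>A\<times>A. V p * E (zp N d p) x)" if x: "x \<in> ?Z" for x
  proof -
    have "w x * w x = (\<Sum>a\<in>A. \<Sum>b\<in>A. v a * E a x * (v b * E b x))"
      unfolding w_def by (rule sum_product)
    also have "\<dots> = (\<Sum>a\<in>A. \<Sum>b\<in>A. V (a,b) * E (zp N d (a,b)) x)"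
    proof (intro sum.cong refl)
      fix a b assume "a \<in> A" "b \<in> A"
      then have "E a x * E b x = E (zadd N d a b) x" using A x Emul by blast
      then show "v a * E a x * (v b * E b x) = V (a,b) * E (zp N d (a,b)) x"
        unfolding V_def by (simp add: algebra_simps)
    qed
    also have "\<dots> = (\<Sum>p\<in>A\<times>A. V p * E (zp N d p) x)"
      unfolding sum.cartesian_product by (simp add: case_prod_unfold)
    finally show ?thesis .
  qed
  have n4: "complex_of_real ((norm (w x))^4) = (w x * w x) * cnj (w x * w x)" for x
  proof -
    have "complex_of_real ((norm (w x))^4) = complex_of_real ((norm (w x))^2) * complex_of_real ((norm (w x))^2)"
      by (simp add: power2_eq_square power4_eq_xxxx)
    also have "\<dots> = (w x * w x) * cnj (w x * w x)" unfolding complex_norm_square by simp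
    finally show ?thesis .
  qed
  define R where "R = (\<Sum>p\<in>A\<times>A. \<Sum>q\<in>A\<times>A. V p * cnj (V q) *
      (\<Sum>x\<in>?Z. E (zp N d p) x * cnj (E (zp N d q) x)))"
  have "complex_of_real (\<Sum>x\<in>?Z. (norm (w x))^4) = (\<Sum>x\<in>?Z. (w x * w x) * cnj (w x * w x))"
    unfolding of_real_sum n4 ..
  also have "\<dots> = (\<Sum>x\<in>?Z. \<Sum>p\<in>A\<times>A. \<Sum>q\<in>A\<times>A. V p * cnj (V q) * (E (zp N d p) x * cnj (E (zp N d q) x)))"
  proof (intro sum.cong refl)
    fix x assume x: "x \<in> ?Z"
    have "(w x * w x) * cnj (w x * w x) = (\<Sum>p\<in>A\<times>A. V p * E (zp N d p) x) * cnj (\<Sum>q\<in>A\<times>A. V q * E (zp N d q) x)"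
      using sq[OF x] by simp
    also have "\<dots> = (\<Sum>p\<in>A\<times>A. \<Sum>q\<in>A\<times>A. (V p * E (zp N d p) x) * cnj (V q * E (zp N d q) x))"
      by (simp only: sum_product cnj_sum)
    also have "\<dots> = (\<Sum>p\<in>A\<times>A. \<Sum>q\<in>A\<times>A. V p * cnj (V q) * (E (zp N d p) x * cnj (E (zp N d q) x)))"
      by (simp only: complex_cnj_mult mult_ac)
    finally show "(w x * w x) * cnj (w x * w x) = (\<Sum>p\<in>A\<times>A. \<Sum>q\<in>A\<times>A. V p * cnj (V q) * (E (zp N d p) x * cnj (E (zp N d q) x)))" .
  qed
  also have "\<dots> = (\<Sum>p\<in>A\<times>A. \<Sum>x\<in>?Z. \<Sum>q\<in>A\<times>A. V p * cnj (V q) * (E (zp N d p) x * cnj (E (zp N d q) x)))"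
    by (rule sum.swap)
  also have "\<dots> = (\<Sum>p\<in>A\<times>A. \<Sum>q\<in>A\<times>A. \<Sum>x\<in>?Z. V p * cnj (V q) * (E (zp N d p) x * cnj (E (zp N d q) x)))"
    by (intro sum.cong refl) (rule sum.swap)
  also have "\<dots> = R"
    unfolding R_def by (intro sum.cong refl) (rule sum_distrib_left[symmetric])
  finally have eqR: "complex_of_real (\<Sum>x\<in>?Z. (norm (w x))^4) = R" .
  define F where "F p q = V p * cnj (V q) * (if zp N d p = zp N d q then (of_nat N ^ d :: complex) else 0)" for p q
  have RF: "R = (\<Sum>p\<in>A\<times>A. \<Sum>q\<in>A\<times>A. F p q)"
    unfolding R_def F_def
  proof (intro sum.cong refl)
    fix p q assume p: "p \<in> A\<times>A" and q: "q \<in> A\<times>A"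
    show "V p * cnj (V q) * (\<Sum>x\<in>?Z. E (zp N d p) x * cnj (E (zp N d q) x)) =
          V p * cnj (V q) * (if zp N d p = zp N d q then of_nat N ^ d else 0)"
      using Eorth[OF zadd_in[OF N] zadd_in[OF N]] by simp
  qed
  have "norm R \<le> (\<Sum>p\<in>A\<times>A. norm (\<Sum>q\<in>A\<times>A. F p q))"
    unfolding RF by (rule norm_sum)
  also have "\<dots> \<le> (\<Sum>p\<in>A\<times>A. \<Sum>q\<in>A\<times>A. norm (F p q))"
    by (intro sum_mono norm_sum)
  also have "\<dots> = real N ^ d *
     (\<Sum>p\<in>A\<times>A. \<Sum>q\<in>A\<times>A. if zp N d p = zp N d q then
        norm (v (fst p)) * norm (v (snd p)) * norm (v (fst q)) * norm (v (snd q)) else 0)"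
    unfolding sum_distrib_left
    by (intro sum.cong refl) (simp add: F_def V_def norm_mult norm_power)
  finally have "norm R \<le> real N ^ d * (\<Sum>p\<in>A\<times>A. \<Sum>q\<in>A\<times>A. if zp N d p = zp N d q then
        norm (v (fst p)) * norm (v (snd p)) * norm (v (fst q)) * norm (v (snd q)) else 0)" .
  moreover have "norm R = (\<Sum>x\<in>?Z. (norm (w x))^4)"
    unfolding eqR[symmetric] norm_of_real by (rule abs_of_nonneg[OF sum_nonneg]) simp
  ultimately show ?thesis unfolding w_def by simp
qed



lemma zadd_comm: "zadd N d a b = zadd N d b a"
  unfolding zadd_def by (rule ext) (simp add: add.commute)

lemma card_filter_sum: "finite X \<Longrightarrow> card {z\<in>X. P z} = (\<Sum>z\<in>X. if P z then 1 else 0)"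
  by (simp add: sum.inter_filter[symmetric])

lemma energy_sum:
  assumes fin: "finite A"
  shows "real (energy N d A) = (\<Sum>p\<in>A\<times>A. \<Sum>q\<in>A\<times>A. if zp N d p = zp N d q then 1 else 0)"
proof -
  let ?X = "(A\<times>A)\<times>(A\<times>A)"
  let ?Y = "{z\<in>?X. zp N d (fst z) = zp N d (snd z)}"
  let ?f = "\<lambda>z::((nat\<Rightarrow>int)\<times>(nat\<Rightarrow>int))\<times>((nat\<Rightarrow>int)\<times>(nat\<Rightarrow>int)). (fst (fst z), snd (fst z), fst (snd z), snd (snd z))"
  have Q: "{(x1, x2, x3, x4). x1 \<in> A \<and> x2 \<in> A \<and> x3 \<in> A \<and> x4 \<in> A \<and>
      zadd N d x1 x2 = zadd N d x3 x4} = ?f ` ?Y"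
  proof (rule set_eqI, rule iffI)
    fix t assume "t \<in> {(x1, x2, x3, x4). x1 \<in> A \<and> x2 \<in> A \<and> x3 \<in> A \<and> x4 \<in> A \<and>
      zadd N d x1 x2 = zadd N d x3 x4}"
    then obtain x1 x2 x3 x4 where t: "t = (x1,x2,x3,x4)" "x1 \<in> A" "x2 \<in> A" "x3 \<in> A" "x4 \<in> A"
      "zadd N d x1 x2 = zadd N d x3 x4" by auto
    then have "((x1,x2),(x3,x4)) \<in> ?Y" by auto
    moreover have "t = ?f ((x1,x2),(x3,x4))" using t by simp
    ultimately show "t \<in> ?f ` ?Y" by blast
  qed auto
  have inj: "inj_on ?f ?Y" by (rule inj_onI) (auto simp: prod_eq_iff)
  have "energy N d A = card ?Y" unfolding energy_def Q by (rule card_image[OF inj])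
  also have "\<dots> = (\<Sum>z\<in>?X. if zp N d (fst z) = zp N d (snd z) then 1 else 0)"
    using fin by (simp add: card_filter_sum)
  finally have "real (energy N d A) = real (\<Sum>z\<in>?X. if zp N d (fst z) = zp N d (snd z) then 1 else 0)"
    by simp
  also have "\<dots> = (\<Sum>z\<in>?X. if zp N d (fst z) = zp N d (snd z) then 1 else 0)"
    unfolding of_nat_sum by (rule sum.cong) auto
  also have "\<dots> = (\<Sum>p\<in>A\<times>A. \<Sum>q\<in>A\<times>A. if zp N d p = zp N d q then 1 else 0)"
    by (simp add: sum.cartesian_product case_prod_unfold)
  finally show ?thesis .
qed

lemma comb:
  fixes a :: "(nat\<Rightarrow>int) \<Rightarrow> real"
  assumes fin: "finite A" and nn: "\<And>m. m \<in> A \<Longrightarrow> 0 \<le> a m" and bd: "\<And>m. m \<in> A \<Longrightarrow> a m \<le> B"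
  shows "(\<Sum>p\<in>A\<times>A. \<Sum>q\<in>A\<times>A. if zp N d p = zp N d q then a (fst p) * a (snd p) * a (fst q) * a (snd q) else 0)
    \<le> 2 * (\<Sum>m\<in>A. (a m)^2)^2 - (\<Sum>m\<in>A. (a m)^4)
       + (real (energy N d A) - (2 * real (card A)^2 - real (card A))) * B^4"
proof -
  define G where "G p q = a (fst p) * a (snd p) * a (fst q) * a (snd q) - B^4" for p q :: "(nat\<Rightarrow>int)\<times>(nat\<Rightarrow>int)"
  define H where "H p = (a (fst p))^2 * (a (snd p))^2 - B^4" for p :: "(nat\<Rightarrow>int)\<times>(nat\<Rightarrow>int)"
  have finAA: "finite (A\<times>A)" using fin by simp
  have Gle: "G p q \<le> 0" if "p \<in> A\<times>A" "q \<in> A\<times>A" for p q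
  proof -
    have B0: "0 \<le> B" using that nn[of "fst p"] bd[of "fst p"] by (auto simp: mem_Times_iff)
    then have "0 \<le> B * B * B" by simp
    have "a (fst p) * a (snd p) * a (fst q) * a (snd q) \<le> B * B * B * B"
      using that nn bd B0 \<open>0 \<le> B * B * B\<close> by (intro mult_mono) (auto simp: mult_nonneg_nonneg intro: order_trans)
    then show ?thesis unfolding G_def by (simp add: power4_eq_xxxx)
  qed
  have split: "(\<Sum>p\<in>A\<times>A. \<Sum>q\<in>A\<times>A. if zp N d p = zp N d q then a (fst p) * a (snd p) * a (fst q) * a (snd q) else 0)
      = (\<Sum>p\<in>A\<times>A. \<Sum>q\<in>A\<times>A. if zp N d p = zp N d q then G p q else 0)
        + B^4 * (\<Sum>p\<in>A\<times>A. \<Sum>q\<in>A\<times>A. if zp N d p = zp N d q then 1 else 0)"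
    unfolding sum_distrib_left sum.distrib[symmetric] by (intro sum.cong refl) (simp add: G_def)
  have inner: "(\<Sum>q\<in>A\<times>A. if zp N d p = zp N d q then G p q else 0) \<le> H p + (if fst p = snd p then 0 else H p)"
    if p: "p \<in> A\<times>A" for p
  proof -
    let ?Q = "{q\<in>A\<times>A. zp N d p = zp N d q}"
    let ?D = "{p, prod.swap p}"
    have DQ: "?D \<subseteq> ?Q" using p zadd_comm[of N d "fst p" "snd p"] by (auto simp: prod.swap_def)
    have finQ: "finite ?Q" using finAA by simp
    have "(\<Sum>q\<in>A\<times>A. if zp N d p = zp N d q then G p q else 0) = (\<Sum>q\<in>?Q. G p q)"
      using finAA by (simp add: sum.inter_filter)
    also have "\<dots> = (\<Sum>q\<in>?Q - ?D. G p q) + (\<Sum>q\<in>?D. G p q)"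
      by (rule sum.subset_diff[OF DQ finQ])
    also have "\<dots> \<le> (\<Sum>q\<in>?D. G p q)"
    proof -
      have "(\<Sum>q\<in>?Q - ?D. G p q) \<le> 0" using p by (intro sum_nonpos) (auto intro: Gle)
      then show ?thesis by simp
    qed
    also have "(\<Sum>q\<in>?D. G p q) = H p + (if fst p = snd p then 0 else H p)"
    proof (cases "fst p = snd p")
      case True
      then have "prod.swap p = p" by (simp add: prod.swap_def prod_eq_iff)
      then show ?thesis using True by (simp add: G_def H_def power2_eq_square algebra_simps)
    next
      case False
      then have "prod.swap p \<noteq> p" by (auto simp: prod.swap_def prod_eq_iff)
      then show ?thesis using False by (simp add: G_def H_def power2_eq_square algebra_simps)
    qed
    finally show ?thesis .
  qed
  have sumH: "(\<Sum>p\<in>A\<times>A. H p) = (\<Sum>m\<in>A. (a m)^2)^2 - real (card A)^2 * B^4"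
  proof -
    have "(\<Sum>p\<in>A\<times>A. H p) = (\<Sum>x\<in>A. \<Sum>y\<in>A. (a x)^2 * (a y)^2 - B^4)"
      unfolding H_def by (simp add: sum.cartesian_product case_prod_unfold)
    also have "\<dots> = (\<Sum>x\<in>A. \<Sum>y\<in>A. (a x)^2 * (a y)^2) - real (card A)^2 * B^4"
      by (simp add: sum_subtractf power2_eq_square)
    also have "(\<Sum>x\<in>A. \<Sum>y\<in>A. (a x)^2 * (a y)^2) = (\<Sum>m\<in>A. (a m)^2)^2"
      by (simp add: power2_eq_square[of "sum _ _"] sum_product)
    finally show ?thesis .
  qed
  have sumHd: "(\<Sum>p\<in>A\<times>A. if fst p = snd p then H p else 0) = (\<Sum>m\<in>A. (a m)^4) - real (card A) * B^4"
  proof -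
    have "(\<Sum>p\<in>A\<times>A. if fst p = snd p then H p else 0) = (\<Sum>x\<in>A. \<Sum>y\<in>A. if x = y then H (x,y) else 0)"
      by (subst sum.cartesian_product, rule sum.cong, auto)
    also have "\<dots> = (\<Sum>x\<in>A. H (x,x))" using fin by (simp add: sum.delta)
    also have "\<dots> = (\<Sum>m\<in>A. (a m)^4) - real (card A) * B^4"
      unfolding H_def by (simp add: sum_subtractf power2_eq_square power4_eq_xxxx mult.assoc)
    finally show ?thesis .
  qed
  have "(\<Sum>p\<in>A\<times>A. \<Sum>q\<in>A\<times>A. if zp N d p = zp N d q then G p q else 0)
      \<le> (\<Sum>p\<in>A\<times>A. H p + (if fst p = snd p then 0 else H p))"
    by (rule sum_mono) (rule inner)
  also have "\<dots> = 2 * (\<Sum>p\<in>A\<times>A. H p) - (\<Sum>p\<in>A\<times>A. if fst p = snd p then H p else 0)"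
  proof -
    have "(\<Sum>p\<in>A\<times>A. H p + (if fst p = snd p then 0 else H p)) = (\<Sum>p\<in>A\<times>A. 2 * H p - (if fst p = snd p then H p else 0))"
      by (intro sum.cong refl) auto
    then show ?thesis by (simp add: sum_subtractf sum_distrib_left)
  qed
  finally have "(\<Sum>p\<in>A\<times>A. \<Sum>q\<in>A\<times>A. if zp N d p = zp N d q then G p q else 0)
      \<le> 2 * ((\<Sum>m\<in>A. (a m)^2)^2 - real (card A)^2 * B^4) - ((\<Sum>m\<in>A. (a m)^4) - real (card A) * B^4)"
    unfolding sumH sumHd .
  then show ?thesis unfolding split energy_sum[OF fin, symmetric] by (simp add: algebra_simps)
qed

lemma energy_lower: "finite A \<Longrightarrow> 2 * real (card A)^2 - real (card A) \<le> real (energy N d A)"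
proof -
  assume fin: "finite A"
  have z: "(\<Sum>p\<in>A\<times>A. \<Sum>q\<in>A\<times>A. if zp N d p = zp N d q then (0::real) * 0 * 0 * 0 else 0) = 0"
    by (intro sum.neutral ballI) simp
  show ?thesis using comb[of A "\<lambda>_. 0" 1 N d] fin unfolding z by simp
qed

lemma comb_simple:
  fixes a :: "(nat\<Rightarrow>int) \<Rightarrow> real"
  assumes fin: "finite A" and nn: "\<And>m. m \<in> A \<Longrightarrow> 0 \<le> a m" and bd: "\<And>m. m \<in> A \<Longrightarrow> a m \<le> B"
  shows "(\<Sum>p\<in>A\<times>A. \<Sum>q\<in>A\<times>A. if zp N d p = zp N d q then a (fst p) * a (snd p) * a (fst q) * a (snd q) else 0)
    \<le> real (energy N d A) * B^4"
proof -
  have "(\<Sum>p\<in>A\<times>A. \<Sum>q\<in>A\<times>A. if zp N d p = zp N d q then a (fst p) * a (snd p) * a (fst q) * a (snd q) else 0)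
     \<le> (\<Sum>p\<in>A\<times>A. \<Sum>q\<in>A\<times>A. if zp N d p = zp N d q then B^4 else 0)"
  proof (intro sum_mono)
    fix p q assume "p \<in> A\<times>A" "q \<in> A\<times>A"
    then have B0: "0 \<le> B" using nn[of "fst p"] bd[of "fst p"] by (auto simp: mem_Times_iff)
    then have B3: "0 \<le> B * B * B" by simp
    have "a (fst p) * a (snd p) * a (fst q) * a (snd q) \<le> B * B * B * B"
      using \<open>p \<in> A\<times>A\<close> \<open>q \<in> A\<times>A\<close> nn bd B0 B3 by (intro mult_mono) (auto simp: mult_nonneg_nonneg intro: order_trans)
    then show "(if zp N d p = zp N d q then a (fst p) * a (snd p) * a (fst q) * a (snd q) else 0)
       \<le> (if zp N d p = zp N d q then B^4 else 0)" by (simp add: power4_eq_xxxx)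
  qed
  also have "\<dots> = real (energy N d A) * B^4"
    unfolding energy_sum[OF fin] sum_distrib_right by (intro sum.cong refl) simp
  finally show ?thesis .
qed



lemma final_arith:
  fixes n s tau t e P Q U4 L K \<alpha> :: real
  assumes n: "n > 0" and s: "s \<ge> 1" and tau: "tau \<ge> 1" "tau \<le> t" and te: "t = 2 * e"
    and P: "P > 0" and K: "K \<ge> 0"
    and i: "n * P^2 \<le> tau * Q"
    and ii: "Q \<le> 2 * P^2 - U4 + (L - (2 * s^2 - s)) * (tau * P / n)^2"
    and L: "L \<ge> 2 * s^2 - s"
    and iii: "n \<le> s * tau"
    and iv: "P^2 \<le> s * U4"
    and v: "U4 \<le> K * t powr \<alpha> * (s * P / n)^2 / n"
  shows "n^3 / 8 \<le> e^3 * (L - s * (s - 1) * (1 - sqrt (K / t powr (3 - \<alpha>)) * sqrt (n / (t * s)))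
           - s^2 * (1 - n / (t * s)))"
proof -
  define a where "a = sqrt (K / t powr (3 - \<alpha>))"
  define b where "b = sqrt (n / (t * s))"
  define L' where "L' = L - (2 * s^2 - s)"
  have t0: "t > 0" using tau by simp
  have s0: "s > 0" using s by simp
  have L'0: "L' \<ge> 0" using L unfolding L'_def by simp
  have a0: "a \<ge> 0" and b0: "b \<ge> 0" unfolding a_def b_def using K t0 n s0 by auto
  have a2: "a^2 = K / t powr (3 - \<alpha>)" unfolding a_def using K t0 by simp
  have b2: "b^2 = n / (t * s)" unfolding b_def using t0 n s0 by simp
  have P2: "P^2 > 0" using P by simp
  have U4l: "U4 \<ge> P^2 / s" using iv s0 by (simp add: field_simps)
  have "n * P^2 \<le> tau * (2 * P^2 - P^2 / s + L' * (tau * P / n)^2)"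
  proof -
    have "Q \<le> 2 * P^2 - P^2 / s + L' * (tau * P / n)^2" using ii U4l unfolding L'_def by linarith
    then have "tau * Q \<le> tau * (2 * P^2 - P^2 / s + L' * (tau * P / n)^2)"
      using tau by (intro mult_left_mono) auto
    then show ?thesis using i by linarith
  qed
  also have "\<dots> = P^2 * (tau * (1 + (1 - 1/s) + L' * (tau / n)^2))"
    by (simp add: field_simps power2_eq_square)
  finally have "P^2 * n \<le> P^2 * (tau * (1 + (1 - 1/s) + L' * (tau / n)^2))"
    by (metis mult.commute)
  then have m1: "n \<le> tau * (1 + (1 - 1/s) + L' * (tau / n)^2)"
    using P2 by (simp only: mult_le_cancel_left_pos)
  define Y where "Y = s^2 * a * b * t^2 / n^2"
  have Y0: "Y \<ge> 0" unfolding Y_def using a0 b0 by simp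
  have tp: "t powr (3 - \<alpha>) = t^3 / t powr \<alpha>"
    using t0 by (simp add: powr_diff powr_realpow)
  have tpa: "t powr \<alpha> > 0" using t0 by simp
  have "Y^2 = s^4 * a^2 * b^2 * t^4 / n^4" unfolding Y_def by (simp add: power_mult_distrib power_divide)
  also have "\<dots> = s^3 * K * t powr \<alpha> / n^3"
    unfolding a2 b2 tp using t0 s0 n tpa by (simp add: field_simps power2_eq_square power3_eq_cube power4_eq_xxxx)
  also have "\<dots> \<ge> 1"
  proof -
    have "P^2 \<le> s * (K * t powr \<alpha> * (s * P / n)^2 / n)"
      using iv v s0 by (meson mult_left_mono order_trans less_imp_le)
    also have "\<dots> = P^2 * (s^3 * K * t powr \<alpha> / n^3)"
      using n by (simp add: field_simps power2_eq_square power3_eq_cube)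
    finally have "P^2 * 1 \<le> P^2 * (s^3 * K * t powr \<alpha> / n^3)" by simp
    then show ?thesis using P2 by (simp only: mult_le_cancel_left_pos)
  qed
  finally have "Y^2 \<ge> 1" .
  then have Y1: "Y \<ge> 1" using Y0 by (metis abs_of_nonneg one_le_power power2_le_imp_le not_le one_le_numeral abs_le_square_iff linorder_le_cases power_one)
  have c1: "1 - 1/s \<le> (1 - 1/s) * Y"
  proof -
    have "0 \<le> 1 - 1/s" using s by (simp add: field_simps)
    then show ?thesis using Y1 by (metis mult_left_mono mult.right_neutral)
  qed
  have c2: "1 \<le> s * tau / n" using iii n by simp
  have m2: "n \<le> tau * (s * tau / n + (1 - 1/s) * Y + L' * (tau / n)^2)"
    using m1 c1 c2 tau by (smt (verit) mult_left_mono)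
  have m3: "n \<le> t * (s * t / n + (1 - 1/s) * Y + L' * (t / n)^2)"
  proof -
    have "s * tau / n \<le> s * t / n" using tau s0 n by (simp add: divide_right_mono)
    moreover have "L' * (tau / n)^2 \<le> L' * (t / n)^2"
      using L'0 tau n by (intro mult_left_mono power_mono) (auto simp: divide_right_mono)
    moreover have "(1 - 1/s) * Y \<ge> 0"
    proof -
      have "0 \<le> 1 - 1/s" using s by (simp add: field_simps)
      then show ?thesis using Y0 by simp
    qed
    ultimately have "tau * (s * tau / n + (1 - 1/s) * Y + L' * (tau / n)^2) \<le> t * (s * t / n + (1 - 1/s) * Y + L' * (t / n)^2)"
      using tau L'0 n s0 by (intro mult_mono) auto
    then show ?thesis using m2 by linarith
  qed
  have m4: "s * t / n + (1 - 1/s) * Y + L' * (t / n)^2 = (t/n)^2 * (s * n / t + s * (s - 1) * a * b + L')"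
    unfolding Y_def using n t0 s0 by (simp add: field_simps power2_eq_square)
  have "n^3 = n * n^2" by (simp add: power2_eq_square power3_eq_cube)
  also have "\<dots> \<le> t * ((t/n)^2 * (s * n / t + s * (s - 1) * a * b + L')) * n^2"
    using m3 m4 n by (simp add: mult_right_mono)
  also have "\<dots> = t^3 * (s * n / t + s * (s - 1) * a * b + L')"
    using n by (simp add: field_simps power2_eq_square power3_eq_cube)
  also have "s * n / t + s * (s - 1) * a * b + L' = L - s * (s - 1) * (1 - a * b) - s^2 * (1 - n / (t * s))"
    unfolding L'_def using t0 s0 by (simp add: field_simps power2_eq_square)
  also have "t^3 = 8 * e^3" unfolding te by simp
  finally have "n^3 \<le> 8 * e^3 * (L - s * (s - 1) * (1 - a * b) - s^2 * (1 - n / (t * s)))" .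
  then show ?thesis unfolding a_def b_def by (simp only: mult.assoc)
qed



lemma sqrt4: "0 \<le> (x::real) \<Longrightarrow> (sqrt x)^4 = x^2"
proof -
  assume x: "0 \<le> x"
  have "(sqrt x)^4 = (sqrt x)^2 * (sqrt x)^2" by (simp only: power4_eq_xxxx power2_eq_square mult.assoc)
  also have "\<dots> = x * x" unfolding real_sqrt_pow2[OF x] ..
  also have "\<dots> = x^2" by (simp add: power2_eq_square)
  finally show ?thesis .
qed

theorem mainTheorem2:
  fixes N d :: nat and f :: "(nat \<Rightarrow> int) \<Rightarrow> complex"
    and S :: "(nat \<Rightarrow> int) set" and K \<alpha> :: real
  assumes "N \<ge> 2" and "d \<ge> 1"
    and "S \<subseteq> ZNd N d"
    and "K \<ge> 0" and "2 \<le> \<alpha>" and "\<alpha> \<le> 3"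
    and energy_bound: "\<forall>T. T \<subseteq> ZNd N d \<and> card T \<le> 2 * card (supp N d f) \<longrightarrow>
             real (energy N d T) \<le> K * real (card T) powr \<alpha>"
    and main: "real (card (supp N d f)) ^ 3 *
        (real (energy N d S)
         - real (card S) * (real (card S) - 1) *
             (1 - sqrt (K / (2 * real (card (supp N d f))) powr (3 - \<alpha>))
                  * sqrt (real N ^ d / (2 * real (card (supp N d f)) * real (card S))))
         - real (card S) ^ 2 * (1 - real N ^ d / (2 * real (card (supp N d f)) * real (card S))))
        < real N ^ (3 * d) / 8"
  shows "\<forall>g. card (supp N d g) = card (supp N d f) \<and>
             (\<forall>m \<in> ZNd N d - S. dft N d g m = dft N d f m) \<longrightarrow>
             (\<forall>x \<in> ZNd N d. g x = f x)"
proof (intro allI impI)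
  fix g
  assume Hg: "card (supp N d g) = card (supp N d f) \<and> (\<forall>m \<in> ZNd N d - S. dft N d g m = dft N d f m)"
  show "\<forall>x \<in> ZNd N d. g x = f x"
  proof (rule ccontr)
    assume "\<not> (\<forall>x \<in> ZNd N d. g x = f x)"
    then obtain x0 where x0: "x0 \<in> ZNd N d" "g x0 \<noteq> f x0" by blast
    have N2: "N \<ge> 2" by fact
    have N0: "N > 0" using N2 by simp
    define Z where "Z = ZNd N d"
    define h where "h x = g x - f x" for x
    define u where "u = dft N d h"
    define T where "T = supp N d h"
    define n where "n = real N ^ d"
    define c where "c = cr N d"
    have n0: "n > 0" using N0 unfolding n_def by simp
    have c0: "c > 0" using cr_pos[OF N0] unfolding c_def .
    have cn: "c * c * n = 1" using cr_sq[OF N0] unfolding c_def n_def .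
    have c4: "c^4 * n = 1 / n" using cn n0 by (simp add: field_simps power4_eq_xxxx)
    have finZ: "finite Z" unfolding Z_def by (rule finite_ZNd)
    have SZ: "S \<subseteq> Z" using assms(3) unfolding Z_def .
    have finS: "finite S" using SZ finZ finite_subset by blast
    have TZ: "T \<subseteq> Z" unfolding T_def supp_def Z_def by auto
    have finT: "finite T" using TZ finZ finite_subset by blast
    have x0T: "x0 \<in> T" unfolding T_def supp_def h_def using x0 by simp
    have hT: "\<And>x. x \<notin> T \<Longrightarrow> x \<in> Z \<Longrightarrow> h x = 0" unfolding T_def supp_def Z_def by auto
    have u_diff: "u m = dft N d g m - dft N d f m" for m
      unfolding u_def dft_def h_def by (simp add: sum_subtractf ring_distribs left_diff_distrib)
    have u0: "\<And>m. m \<in> Z \<Longrightarrow> m \<notin> S \<Longrightarrow> u m = 0" using Hg u_diff unfolding Z_def by simp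
    have "T \<subseteq> supp N d f \<union> supp N d g" unfolding T_def supp_def h_def by auto
    moreover have "finite (supp N d f \<union> supp N d g)" using finZ unfolding supp_def Z_def by auto
    ultimately have "card T \<le> card (supp N d f \<union> supp N d g)" by (rule card_mono[rotated])
    also have "\<dots> \<le> card (supp N d f) + card (supp N d g)" by (rule card_Un_le)
    finally have cardT: "card T \<le> 2 * card (supp N d f)" using Hg by simp
    have T1: "card T \<ge> 1" using x0T finT by (metis One_nat_def Suc_leI card_gt_0_iff empty_iff)
    define tau where "tau = real (card T)"
    define e where "e = real (card (supp N d f))"
    define t where "t = 2 * e"
    have tau1: "tau \<ge> 1" using T1 unfolding tau_def by simp
    have taut: "tau \<le> t" using cardT unfolding tau_def t_def e_def by simp
    define P where "P = (\<Sum>x\<in>Z. (norm (h x))^2)"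
    have P_T: "P = (\<Sum>x\<in>T. (norm (h x))^2)" unfolding P_def
      by (rule sum.mono_neutral_right[OF finZ TZ]) (auto simp: hT)
    have "(norm (h x0))^2 \<le> P" unfolding P_def
      by (rule member_le_sum) (use x0 finZ in \<open>auto simp: Z_def\<close>)
    moreover have "(norm (h x0))^2 > 0" using x0 unfolding h_def by simp
    ultimately have Ppos: "P > 0" by linarith
    have P_S: "P = (\<Sum>m\<in>S. (norm (u m))^2)"
    proof -
      have "P = (\<Sum>m\<in>Z. (norm (u m))^2)" unfolding P_def u_def Z_def using plancherel[OF N2] by simp
      also have "\<dots> = (\<Sum>m\<in>S. (norm (u m))^2)"
        by (rule sum.mono_neutral_right[OF finZ SZ]) (auto simp: u0)
      finally show ?thesis .
    qed
    define s where "s = real (card S)"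
    have "S \<noteq> {}" using Ppos P_S by auto
    then have s1: "s \<ge> 1" using finS unfolding s_def by (simp add: Suc_leI card_gt_0_iff)
    have u_T: "u m = c * (\<Sum>y\<in>T. h y * cnj (chi N d m y))" for m
    proof -
      have "u m = c * (\<Sum>y\<in>Z. h y * cnj (chi N d m y))" unfolding u_def c_def Z_def by (rule dft_chi)
      also have "(\<Sum>y\<in>Z. h y * cnj (chi N d m y)) = (\<Sum>y\<in>T. h y * cnj (chi N d m y))"
        by (rule sum.mono_neutral_right[OF finZ TZ]) (auto simp: hT)
      finally show ?thesis .
    qed
    have u_T': "u m = c * (\<Sum>y\<in>T. h y * cnj (chi N d y m))" for m
      unfolding u_T by (simp only: chi_sym[of N d m])
    have ub: "(norm (u m))^2 \<le> tau * P / n" for m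
    proof -
      have "norm (u m) \<le> c * (\<Sum>y\<in>T. norm (h y))"
      proof -
        have "norm (\<Sum>y\<in>T. h y * cnj (chi N d m y)) \<le> (\<Sum>y\<in>T. norm (h y * cnj (chi N d m y)))"
          by (rule norm_sum)
        also have "\<dots> = (\<Sum>y\<in>T. norm (h y))" by (simp add: norm_mult norm_chi)
        finally show ?thesis unfolding u_T using c0 by (simp add: norm_mult)
      qed
      then have "(norm (u m))^2 \<le> (c * (\<Sum>y\<in>T. norm (h y)))^2" by (simp add: power_mono)
      also have "\<dots> = c^2 * (\<Sum>y\<in>T. norm (h y))^2" by (simp add: power_mult_distrib)
      also have "\<dots> \<le> c^2 * (P * tau)"
        using sum_squared_le_sum_of_squares[of "\<lambda>y. norm (h y)" T] unfolding P_T tau_def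
        by (intro mult_left_mono) auto
      also have "\<dots> = tau * P / n" using cn n0 by (simp add: field_simps power2_eq_square)
      finally show ?thesis .
    qed
    have h_S: "h x = c * (\<Sum>m\<in>S. u m * chi N d m x)" if x: "x \<in> Z" for x
    proof -
      have "h x = c * (\<Sum>m\<in>Z. u m * chi N d m x)"
        using inversion[OF N2, of x d h] x unfolding c_def u_def Z_def by simp
      also have "(\<Sum>m\<in>Z. u m * chi N d m x) = (\<Sum>m\<in>S. u m * chi N d m x)"
        by (rule sum.mono_neutral_right[OF finZ SZ]) (auto simp: u0)
      finally show ?thesis .
    qed
    have hb: "(norm (h x))^2 \<le> s * P / n" if x: "x \<in> Z" for x
    proof -
      have "norm (h x) \<le> c * (\<Sum>m\<in>S. norm (u m))"
      proof -
        have "norm (\<Sum>m\<in>S. u m * chi N d m x) \<le> (\<Sum>m\<in>S. norm (u m * chi N d m x))"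
          by (rule norm_sum)
        also have "\<dots> = (\<Sum>m\<in>S. norm (u m))" by (simp add: norm_mult norm_chi)
        finally show ?thesis unfolding h_S[OF x] using c0 by (simp add: norm_mult)
      qed
      then have "(norm (h x))^2 \<le> (c * (\<Sum>m\<in>S. norm (u m)))^2" by (simp add: power_mono)
      also have "\<dots> = c^2 * (\<Sum>m\<in>S. norm (u m))^2" by (simp add: power_mult_distrib)
      also have "\<dots> \<le> c^2 * (P * s)"
        using sum_squared_le_sum_of_squares[of "\<lambda>m. norm (u m)" S] unfolding P_S s_def
        by (intro mult_left_mono) auto
      also have "\<dots> = s * P / n" using cn n0 by (simp add: field_simps power2_eq_square)
      finally show ?thesis .
    qed
    define H4 where "H4 = (\<Sum>x\<in>Z. (norm (h x))^4)"
    have b3: "P^2 \<le> tau * H4"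
    proof -
      have "P^2 \<le> (\<Sum>x\<in>T. ((norm (h x))^2)^2) * tau"
        unfolding P_T tau_def by (rule sum_squared_le_sum_of_squares)
      also have "(\<Sum>x\<in>T. ((norm (h x))^2)^2) = (\<Sum>x\<in>T. (norm (h x))^4)"
        by (simp add: power_mult[symmetric])
      also have "\<dots> = H4" unfolding H4_def
        by (rule sum.mono_neutral_right[OF finZ TZ, symmetric]) (auto simp: hT)
      finally show ?thesis by (simp add: mult.commute)
    qed
    define Q where "Q = (\<Sum>p\<in>S\<times>S. \<Sum>q\<in>S\<times>S. if zp N d p = zp N d q then
        norm (u (fst p)) * norm (u (snd p)) * norm (u (fst q)) * norm (u (snd q)) else 0)"
    have b4: "n * H4 \<le> Q"
    proof -
      have F: "(\<Sum>x\<in>Z. (norm (\<Sum>m\<in>S. u m * chi N d m x))^4) \<le> n * Q"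
        unfolding Q_def n_def Z_def
      proof (rule fourth[OF N0 assms(3)])
        fix a b x assume "a \<in> ZNd N d" "b \<in> ZNd N d" "x \<in> ZNd N d"
        show "chi N d a x * chi N d b x = chi N d (zadd N d a b) x" by (simp add: chi_zadd[OF N0])
      next
        fix a b assume "a \<in> ZNd N d" "b \<in> ZNd N d"
        then show "(\<Sum>x\<in>ZNd N d. chi N d a x * cnj (chi N d b x)) = (if a = b then of_nat N ^ d else 0)"
          by (rule chi_orth[OF N2])
      qed
      have "H4 = (\<Sum>x\<in>Z. c^4 * (norm (\<Sum>m\<in>S. u m * chi N d m x))^4)"
        unfolding H4_def by (intro sum.cong refl) (simp add: h_S norm_mult power_mult_distrib c0 less_imp_le)
      also have "\<dots> = c^4 * (\<Sum>x\<in>Z. (norm (\<Sum>m\<in>S. u m * chi N d m x))^4)" by (simp add: sum_distrib_left)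
      also have "\<dots> \<le> c^4 * (n * Q)" using F c0 by (intro mult_left_mono) auto
      also have "\<dots> = Q / n" using c4 by (simp add: mult.assoc[symmetric])
      finally show ?thesis using n0 by (simp add: field_simps)
    qed
    define U4 where "U4 = (\<Sum>m\<in>S. (norm (u m))^4)"
    have b5: "Q \<le> 2 * P^2 - U4 + (real (energy N d S) - (2 * s^2 - s)) * (tau * P / n)^2"
    proof -
      have B: "norm (u m) \<le> sqrt (tau * P / n)" for m by (rule real_le_rsqrt[OF ub])
      have "Q \<le> 2 * (\<Sum>m\<in>S. (norm (u m))^2)^2 - (\<Sum>m\<in>S. (norm (u m))^4)
         + (real (energy N d S) - (2 * real (card S)^2 - real (card S))) * (sqrt (tau * P / n))^4"
        unfolding Q_def by (rule comb[OF finS]) (auto simp: B)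
      moreover have "(sqrt (tau * P / n))^4 = (tau * P / n)^2"
        using tau1 Ppos n0 by (intro sqrt4) simp
      ultimately show ?thesis unfolding P_S U4_def s_def by simp
    qed
    have Lb: "real (energy N d S) \<ge> 2 * s^2 - s" unfolding s_def by (rule energy_lower[OF finS])
    have b6: "U4 \<le> real (energy N d T) * (s * P / n)^2 / n"
    proof -
      define QT where "QT = (\<Sum>p\<in>T\<times>T. \<Sum>q\<in>T\<times>T. if zp N d p = zp N d q then
        norm (h (fst p)) * norm (h (snd p)) * norm (h (fst q)) * norm (h (snd q)) else 0)"
      have F: "(\<Sum>m\<in>Z. (norm (\<Sum>y\<in>T. h y * cnj (chi N d y m)))^4) \<le> n * QT"
        unfolding QT_def n_def Z_def
      proof (rule fourth[OF N0 TZ[unfolded Z_def]])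
        fix a b x assume "a \<in> ZNd N d" "b \<in> ZNd N d" "x \<in> ZNd N d"
        show "cnj (chi N d a x) * cnj (chi N d b x) = cnj (chi N d (zadd N d a b) x)"
          by (simp add: chi_zadd[OF N0])
      next
        fix a b assume a: "a \<in> ZNd N d" and b: "b \<in> ZNd N d"
        have "(\<Sum>x\<in>ZNd N d. cnj (chi N d a x) * cnj (cnj (chi N d b x)))
            = cnj (\<Sum>x\<in>ZNd N d. chi N d a x * cnj (chi N d b x))" by (simp add: cnj_sum)
        also have "\<dots> = (if a = b then of_nat N ^ d else 0)" unfolding chi_orth[OF N2 a b] by simp
        finally show "(\<Sum>x\<in>ZNd N d. cnj (chi N d a x) * cnj (cnj (chi N d b x))) = (if a = b then of_nat N ^ d else 0)" .
      qed
      have B: "norm (h y) \<le> sqrt (s * P / n)" if "y \<in> T" for y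
        using that TZ by (intro real_le_rsqrt hb) auto
      have QT: "QT \<le> real (energy N d T) * (sqrt (s * P / n))^4"
        unfolding QT_def by (rule comb_simple[OF finT]) (auto simp: B)
      have sq4: "(sqrt (s * P / n))^4 = (s * P / n)^2"
        using s1 Ppos n0 by (intro sqrt4) simp
      have "U4 = (\<Sum>m\<in>Z. (norm (u m))^4)" unfolding U4_def
        by (rule sum.mono_neutral_right[OF finZ SZ, symmetric]) (auto simp: u0)
      also have "\<dots> = (\<Sum>m\<in>Z. c^4 * (norm (\<Sum>y\<in>T. h y * cnj (chi N d y m)))^4)"
        by (intro sum.cong refl) (simp add: u_T' norm_mult power_mult_distrib c0 less_imp_le)
      also have "\<dots> = c^4 * (\<Sum>m\<in>Z. (norm (\<Sum>y\<in>T. h y * cnj (chi N d y m)))^4)" by (simp add: sum_distrib_left)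
      also have "\<dots> \<le> c^4 * (n * QT)" using F c0 by (intro mult_left_mono) auto
      also have "\<dots> = QT / n" using c4 by (simp add: mult.assoc[symmetric])
      also have "\<dots> \<le> real (energy N d T) * (s * P / n)^2 / n"
        using QT sq4 n0 by (simp add: divide_right_mono)
      finally show ?thesis .
    qed
    have b7: "P^2 \<le> s * U4"
    proof -
      have "P^2 \<le> (\<Sum>m\<in>S. ((norm (u m))^2)^2) * s"
        unfolding P_S s_def by (rule sum_squared_le_sum_of_squares)
      then show ?thesis unfolding U4_def by (simp add: mult.commute)
    qed
    have b8: "real (energy N d T) \<le> K * t powr \<alpha>"
    proof -
      have "real (energy N d T) \<le> K * real (card T) powr \<alpha>"
        using energy_bound TZ cardT unfolding Z_def by blast
      also have "\<dots> \<le> K * t powr \<alpha>"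
        using assms(4,5) taut unfolding tau_def by (intro mult_left_mono powr_mono2) auto
      finally show ?thesis .
    qed
    have v: "U4 \<le> K * t powr \<alpha> * (s * P / n)^2 / n"
      using b6 b8 n0 by (smt (verit) divide_right_mono mult_right_mono zero_le_power2)
    have i: "n * P^2 \<le> tau * Q"
    proof -
      have "n * P^2 \<le> n * (tau * H4)" using b3 n0 by simp
      also have "\<dots> = tau * (n * H4)" by simp
      also have "\<dots> \<le> tau * Q" using b4 tau1 by simp
      finally show ?thesis .
    qed
    have iii: "n \<le> s * tau"
    proof -
      have "(\<Sum>m\<in>S. (norm (u m))^2) \<le> (\<Sum>m\<in>S. tau * P / n)" by (rule sum_mono) (rule ub)
      then have "P \<le> (\<Sum>m\<in>S. tau * P / n)" using P_S by simp
      also have "\<dots> = s * (tau * P / n)" unfolding s_def by simp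
      finally have "P * n \<le> (s * tau) * P" using n0 by (simp add: field_simps)
      then show ?thesis using Ppos by (simp add: mult.commute)
    qed
    have fa: "n^3 / 8 \<le> e^3 * (real (energy N d S) - s * (s - 1) * (1 - sqrt (K / t powr (3 - \<alpha>)) * sqrt (n / (t * s)))
           - s^2 * (1 - n / (t * s)))"
      by (rule final_arith[OF n0 s1 tau1 taut t_def Ppos assms(4) i b5 Lb iii b7 v])
    have "n^3 = real N ^ (3 * d)" unfolding n_def by (simp add: power_mult[symmetric] mult.commute)
    then have main': "e^3 * (real (energy N d S) - s * (s - 1) * (1 - sqrt (K / t powr (3 - \<alpha>)) * sqrt (n / (t * s)))
           - s^2 * (1 - n / (t * s))) < n^3 / 8"
      using main[folded n_def] unfolding e_def t_def s_def by simp
    then show False using fa by linarith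
  qed
qed


end
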